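(* Let $\mathscr{U}\subset\mathbb{C}^n$ be a bounded (nonempty) monomial polyhedron defined by a matrix $B\in M_n(\mathbb{Q})$. Then, after multiplying each row of $B$ by a suitable positive rational number and possibly interchanging two rows (which does not change $\mathscr{U}$), $\mathscr{U}$ is represented by a matrix $B$ satisfying $B\in M_n(\mathbb{Z})$, $\det B>0$, and $B^{-1}\succeq 0$ (all entries of $B^{-1}$ nonnegative). In particular any representing matrix of a bounded monomial polyhedron is invertible.
   Context: For $B\in M_n(\mathbb{Q})$ with rows $b^j$, the monomial polyhedron defined by $B$ is $\mathscr{U}=\{z\in\mathbb{C}^n: \prod_{k}|z_k|^{b^j_k}<1 \text{ for all } j\}$, where $z$ is excluded if some product is undefined due to division by zero (some $z_k=0$ with $b^j_k<0$). Equivalently, with $\rho(z)=(|z_1|,\dots,|z_n|)^T$ and $r^B=(r^{b^1},\dots,r^{b^n})^T$, $r^{b}=\prod_k r_k^{b_k}$, $\mathscr{U}=\{z: \rho(z)^B \text{ defined and } \rho(z)^B\prec \mathbb{1}^T\}$ with $\prec$ elementwise strict order. $\succeq$ denotes elementwise order. *)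

theory Defs
  imports "HOL-Analysis.Analysis" "HOL-Combinatorics.Transposition"
begin

text \<open>Real power r^b with rational exponent b, for r \<ge> 0, using the convention 0^0 = 1
  (only used where the monomial is defined, i.e. r > 0 or b \<ge> 0).\<close>
definition qpow :: "real \<Rightarrow> rat \<Rightarrow> real" where
  "qpow r b = (if b = 0 then 1 else r powr (of_rat b))"

text \<open>Monomial polyhedron defined by B (rows b^j): z is in it iff every monomial
  prod_k |z_k|^(b^j_k) is defined (no z_k = 0 with b^j_k < 0) and is < 1.\<close>
definition monomial_polyhedron :: "rat^'n^'n \<Rightarrow> (complex^'n) set" where
  "monomial_polyhedron B =
     {z. \<forall>j. (\<forall>k. B$j$k < 0 \<longrightarrow> z$k \<noteq> 0) \<and>
              (\<Prod>k\<in>UNIV. qpow (norm (z$k)) (B$j$k)) < 1}"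

end

theory Submission
  imports Defs
begin

lemma qpow_exp: "qpow (exp y) b = exp (of_rat b * y)"
  by (simp add: qpow_def powr_def)

lemma mem_exp:
  fixes B :: "rat^'n^'n" and x :: "real^'n"
  assumes "\<And>j. (\<Sum>k\<in>UNIV. of_rat (B$j$k) * x$k) < 0"
  shows "(\<chi> k. complex_of_real (exp (x$k))) \<in> monomial_polyhedron B"
proof -
  have "(\<Prod>k\<in>UNIV. qpow (norm ((\<chi> k. complex_of_real (exp (x$k)))$k)) (B$j$k)) < 1" for j
  proof -
    have "(\<Prod>k\<in>UNIV. qpow (norm ((\<chi> k. complex_of_real (exp (x$k)))$k)) (B$j$k))
       = (\<Prod>k\<in>UNIV. exp (of_rat (B$j$k) * x$k))"
      by (simp add: qpow_exp)
    also have "\<dots> = exp (\<Sum>k\<in>UNIV. of_rat (B$j$k) * x$k)" by (simp add: exp_sum)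
    also have "\<dots> < 1" using assms[of j] by simp
    finally show ?thesis .
  qed
  then show ?thesis unfolding monomial_polyhedron_def by simp
qed

lemma cone_nonpos:
  fixes B :: "rat^'n^'n" and x :: "real^'n"
  assumes bd: "bounded (monomial_polyhedron B)"
    and cx: "\<And>j. (\<Sum>k\<in>UNIV. of_rat (B$j$k) * x$k) < 0"
  shows "x$k \<le> 0"
proof (rule ccontr)
  assume "\<not> x$k \<le> 0"
  hence xk: "x$k > 0" by simp
  obtain R where R: "\<And>z. z \<in> monomial_polyhedron B \<Longrightarrow> norm z \<le> R"
    using bd unfolding bounded_iff by blast
  define t where "t = (\<bar>R\<bar> + 1) / x$k"
  have t: "t > 0" using xk by (simp add: t_def)
  have cone: "(\<Sum>k\<in>UNIV. of_rat (B$j$k) * (t *s x)$k) < 0" for j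
  proof -
    have "(\<Sum>k\<in>UNIV. of_rat (B$j$k) * (t *s x)$k) = t * (\<Sum>k\<in>UNIV. of_rat (B$j$k) * x$k)"
      by (simp add: sum_distrib_left algebra_simps)
    also have "\<dots> < 0" using t cx[of j] by (simp add: mult_pos_neg)
    finally show ?thesis .
  qed
  have "norm ((\<chi> k. complex_of_real (exp ((t *s x)$k))) $ k) \<le> R"
    using R[OF mem_exp[OF cone]] Finite_Cartesian_Product.norm_nth_le order_trans by metis
  hence "exp (t * x$k) \<le> R" by simp
  moreover have "t * x$k = \<bar>R\<bar> + 1" using xk by (simp add: t_def)
  moreover have "t * x$k < exp (t * x$k)" using exp_ge_add_one_self[of "t * x$k"] by linarith
  ultimately show False by linarith
qed

lemma cone_exists:
  fixes B :: "rat^'n^'n"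
  assumes z: "z \<in> monomial_polyhedron B"
  shows "\<exists>x::real^'n. \<forall>j. (\<Sum>k\<in>UNIV. of_rat (B$j$k) * x$k) < 0"
proof -
  define L where "L k = ln (norm (z$k))" for k
  define S where "S j = (\<Sum>k\<in>UNIV. if z$k = 0 then 0 else of_rat (B$j$k) * L k)" for j
  define P where "P j = (\<Sum>k\<in>UNIV. if z$k = 0 then of_rat (B$j$k) else (0::real))" for j
  define xM where "xM M = (\<chi> k. if z$k = 0 then -M else L k)" for M :: real
  have val: "(\<Sum>k\<in>UNIV. of_rat (B$j$k) * xM M $k) = S j - M * P j" for j M
  proof -
    have "S j - M * P j = (\<Sum>k\<in>UNIV. (if z$k = 0 then 0 else of_rat (B$j$k) * L k)
        - M * (if z$k = 0 then of_rat (B$j$k) else (0::real)))"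
      by (simp add: S_def P_def sum_subtractf sum_distrib_left)
    also have "\<dots> = (\<Sum>k\<in>UNIV. of_rat (B$j$k) * xM M $k)"
      by (rule sum.cong) (auto simp: xM_def)
    finally show ?thesis by simp
  qed
  have defd: "\<And>j k. B$j$k < 0 \<Longrightarrow> z$k \<noteq> 0"
    and lt: "\<And>j. (\<Prod>k\<in>UNIV. qpow (norm (z$k)) (B$j$k)) < 1"
    using z unfolding monomial_polyhedron_def by auto
  have ev: "eventually (\<lambda>M. S j - M * P j < 0) at_top" for j
  proof (cases "\<exists>k. z$k = 0 \<and> B$j$k > 0")
    case True
    then obtain k where k: "z$k = 0" "B$j$k > 0" by blast
    have "P j > 0" unfolding P_def
    proof (rule sum_pos2[where i=k])
      show "0 \<le> (if z$i = 0 then real_of_rat (B$j$i) else 0)" if "i \<in> UNIV" for i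
      proof -
        have "z$i = 0 \<Longrightarrow> 0 \<le> B$j$i" using defd[of j i] by linarith
        then show "0 \<le> (if z$i = 0 then real_of_rat (B$j$i) else 0)" by simp
      qed
    qed (use k in auto)
    then have "\<forall>M\<ge>(\<bar>S j\<bar> + 1) / P j. S j - M * P j < 0"
      by (auto simp: field_simps)
    then show ?thesis unfolding eventually_at_top_linorder by blast
  next
    case False
    then have z0: "z$k = 0 \<Longrightarrow> B$j$k = 0" for k using defd[of j k] by force
    then have "P j = 0" unfolding P_def by (intro sum.neutral) auto
    have "(\<Prod>k\<in>UNIV. qpow (norm (z$k)) (B$j$k))
        = (\<Prod>k\<in>UNIV. exp (if z$k = 0 then 0 else of_rat (B$j$k) * L k))"
      by (rule prod.cong) (auto simp: z0 qpow_def powr_def L_def)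
    also have "\<dots> = exp (S j)" by (simp add: exp_sum S_def)
    finally have "S j < 0" using lt[of j] by simp
    then show ?thesis using \<open>P j = 0\<close> by simp
  qed
  have "eventually (\<lambda>M. \<forall>j. S j - M * P j < 0) at_top"
    by (rule eventually_all_finite) (use ev in auto)
  then obtain N where "\<forall>j. S j - N * P j < 0"
    unfolding eventually_at_top_linorder by auto
  then show ?thesis using val by metis
qed

lemma eps_nonneg:
  fixes m s :: real
  assumes "\<And>e. e > 0 \<Longrightarrow> - m - e * s \<le> 0"
  shows "m \<ge> 0"
proof (rule ccontr)
  assume "\<not> m \<ge> 0"
  hence m: "m < 0" by simp
  define e where "e = - m / (2 * (\<bar>s\<bar> + 1))"
  have "2 * (\<bar>s\<bar> + 1) > 0" by simp
  then have e: "e > 0" using m unfolding e_def by (intro divide_pos_pos) auto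
  have "e * s \<le> e * \<bar>s\<bar>" using e by (simp add: mult_left_mono)
  also have "e * \<bar>s\<bar> < -m / 2" using m by (simp add: e_def field_simps)
  finally show False using assms[OF e] m by linarith
qed

lemma key:
  fixes B :: "rat^'n^'n"
  assumes bd: "bounded (monomial_polyhedron B)"
    and ne: "monomial_polyhedron B \<noteq> {}"
  shows "invertible B \<and> (\<forall>j k. matrix_inv B $ j $ k \<ge> 0)"
proof -
  obtain x0 :: "real^'n" where x0: "\<And>j. (\<Sum>k\<in>UNIV. of_rat (B$j$k) * x0$k) < 0"
    using cone_exists ne by blast
  have "\<forall>v. B *v v = 0 \<longrightarrow> v = 0"
  proof (intro allI impI)
    fix v :: "rat^'n" assume Bv: "B *v v = 0"
    define vr where "vr = (\<chi> k. real_of_rat (v$k))"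
    have vr0: "(\<Sum>k\<in>UNIV. of_rat (B$j$k) * vr$k) = 0" for j
    proof -
      have "(\<Sum>k\<in>UNIV. of_rat (B$j$k) * vr$k) = of_rat ((B *v v)$j)"
        by (simp add: vr_def matrix_vector_mult_def of_rat_sum of_rat_mult)
      then show ?thesis using Bv by simp
    qed
    have cone: "x0$k + t * vr$k \<le> 0" for t k
    proof -
      have "(\<Sum>k\<in>UNIV. of_rat (B$j$k) * (x0 + t *s vr)$k) < 0" for j
      proof -
        have "(\<Sum>k\<in>UNIV. of_rat (B$j$k) * (x0 + t *s vr)$k)
           = (\<Sum>k\<in>UNIV. of_rat (B$j$k) * x0$k) + t * (\<Sum>k\<in>UNIV. of_rat (B$j$k) * vr$k)"
          by (simp add: sum.distrib sum_distrib_left algebra_simps)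
        then show ?thesis using x0[of j] vr0[of j] by simp
      qed
      from cone_nonpos[OF bd this] show ?thesis by simp
    qed
    have "vr$k = 0" for k
    proof (rule ccontr)
      assume nz: "vr$k \<noteq> 0"
      define t where "t = (\<bar>x0$k\<bar> + 1) / vr$k"
      have "t * vr$k = \<bar>x0$k\<bar> + 1" using nz by (simp add: t_def)
      then show False using cone[of k t] by linarith
    qed
    then show "v = 0" by (simp add: vr_def vec_eq_iff)
  qed
  then have inv: "invertible B"
    unfolding invertible_left_inverse using matrix_left_invertible_ker by blast
  define M where "M = matrix_inv B"
  have BM: "B ** M = mat 1"
    using inv unfolding M_def invertible_def matrix_inv_def by (rule someI_ex[THEN conjunct1])
  have BMe: "(\<Sum>i\<in>UNIV. of_rat (B$j$i) * of_rat (M$i$l)) = (if j = l then 1 else (0::real))" for j l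
  proof -
    have "(\<Sum>i\<in>UNIV. of_rat (B$j$i) * of_rat (M$i$l)) = (of_rat ((B ** M)$j$l) :: real)"
      by (simp add: matrix_matrix_mult_def of_rat_sum of_rat_mult)
    then show ?thesis using BM by (simp add: mat_def)
  qed
  have "M$a$b \<ge> 0" for a b
  proof -
    define s where "s = (\<Sum>l\<in>UNIV. real_of_rat (M$a$l))"
    have "- of_rat (M$a$b) - e * s \<le> 0" if e: "e > 0" for e
    proof -
      define y where "y = (\<chi> l. - (if l = b then 1 else 0) - e)"
      define x where "x = (\<chi> i. \<Sum>l\<in>UNIV. of_rat (M$i$l) * y$l)"
      have "(\<Sum>i\<in>UNIV. of_rat (B$j$i) * x$i) < 0" for j
      proof -
        have "(\<Sum>i\<in>UNIV. of_rat (B$j$i) * x$i)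
            = (\<Sum>i\<in>UNIV. \<Sum>l\<in>UNIV. of_rat (B$j$i) * of_rat (M$i$l) * y$l)"
          by (simp add: x_def sum_distrib_left mult.assoc)
        also have "\<dots> = (\<Sum>l\<in>UNIV. \<Sum>i\<in>UNIV. of_rat (B$j$i) * of_rat (M$i$l) * y$l)"
          by (rule sum.swap)
        also have "\<dots> = (\<Sum>l\<in>UNIV. (if j = l then 1 else 0) * y$l)"
          by (simp add: sum_distrib_right[symmetric] BMe)
        also have "\<dots> = (\<Sum>l\<in>UNIV. if j = l then y$l else 0)"
          by (rule sum.cong) auto
        also have "\<dots> = y$j" by (simp add: sum.delta)
        also have "\<dots> < 0" using e by (simp add: y_def)
        finally show ?thesis .
      qed
      from cone_nonpos[OF bd this, of a] have "x$a \<le> 0" .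
      moreover have "x$a = - of_rat (M$a$b) - e * s"
      proof -
        have "x$a = (\<Sum>l\<in>UNIV. - (if l = b then of_rat (M$a$l) else 0) - e * of_rat (M$a$l))"
          unfolding x_def y_def by (simp add: algebra_simps) (rule sum.cong, auto)
        also have "\<dots> = - of_rat (M$a$b) - e * s"
          by (simp add: sum_subtractf sum_negf s_def sum_distrib_left)
        finally show ?thesis .
      qed
      ultimately show ?thesis by simp
    qed
    then have "(0::real) \<le> of_rat (M$a$b)" by (rule eps_nonneg)
    then show ?thesis by simp
  qed
  then show ?thesis using inv unfolding M_def by blast
qed

lemma qpow_scale:
  assumes "r \<ge> 0" "c > 0"
  shows "qpow r (c * b) = (qpow r b) powr (of_rat c)"
  using assms by (auto simp: qpow_def powr_powr of_rat_mult mult.commute)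

lemma powr_lt1_iff:
  fixes X c :: real
  assumes "X \<ge> 0" "c > 0"
  shows "X powr c < 1 \<longleftrightarrow> X < 1"
proof (cases "X = 0")
  case False
  then have "X > 0" using assms by simp
  then show ?thesis using assms
    by (simp add: powr_def mult_less_0_iff)
qed simp

lemma row_scale:
  fixes b :: "rat^'n" and z :: "complex^'n"
  assumes c: "c > 0"
  shows "((\<forall>k. (c *s b)$k < 0 \<longrightarrow> z$k \<noteq> 0) \<and> (\<Prod>k\<in>UNIV. qpow (norm (z$k)) ((c *s b)$k)) < 1)
     \<longleftrightarrow> ((\<forall>k. b$k < 0 \<longrightarrow> z$k \<noteq> 0) \<and> (\<Prod>k\<in>UNIV. qpow (norm (z$k)) (b$k)) < 1)"
proof -
  have "(\<Prod>k\<in>UNIV. qpow (norm (z$k)) ((c *s b)$k)) = (\<Prod>k\<in>UNIV. qpow (norm (z$k)) (b$k)) powr (of_rat c)"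
    using c by (simp add: qpow_scale prod_powr_distrib)
  moreover have "(\<Prod>k\<in>UNIV. qpow (norm (z$k)) (b$k)) \<ge> 0"
    by (intro prod_nonneg) (simp add: qpow_def)
  moreover have "((c *s b)$k < 0) = (b$k < 0)" for k using c by (simp add: mult_less_0_iff)
  ultimately show ?thesis using c by (simp add: powr_lt1_iff)
qed

lemma polyhedron_scale_perm:
  fixes B :: "rat^'n^'n"
  assumes c: "c > 0" and p: "p permutes (UNIV :: 'n set)"
  shows "monomial_polyhedron (\<chi> j. c *s B $ p j) = monomial_polyhedron B"
proof -
  have "(\<forall>j. R (B $ p j)) \<longleftrightarrow> (\<forall>j. R (B $ j))" for R
    using p by (metis permutes_surj surj_def)
  note perm = this
  define R where "R z b = ((\<forall>k. b$k < 0 \<longrightarrow> z$k \<noteq> 0) \<and> (\<Prod>k\<in>UNIV. qpow (norm (z$k)) (b$k)) < 1)"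
    for z :: "complex^'n" and b :: "rat^'n"
  show ?thesis
  proof (rule set_eqI)
    fix z :: "complex^'n"
    have "z \<in> monomial_polyhedron (\<chi> j. c *s B $ p j) \<longleftrightarrow> (\<forall>j. R z (c *s B $ p j))"
      unfolding monomial_polyhedron_def R_def by (simp del: vector_scalar_mult_def)
    also have "\<dots> \<longleftrightarrow> (\<forall>j. R z (B $ p j))" unfolding R_def using row_scale[OF c] by blast
    also have "\<dots> \<longleftrightarrow> (\<forall>j. R z (B $ j))" by (rule perm)
    also have "\<dots> \<longleftrightarrow> z \<in> monomial_polyhedron B"
      unfolding monomial_polyhedron_def R_def by simp
    finally show "z \<in> monomial_polyhedron (\<chi> j. c *s B $ p j) \<longleftrightarrow> z \<in> monomial_polyhedron B" .
  qed
qed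

lemma common_denom:
  fixes B :: "rat^'n^'n"
  shows "\<exists>D::int. D > 0 \<and> (\<forall>j k. of_int D * B$j$k \<in> \<int>)"
proof -
  define den where "den r = snd (quotient_of r)" for r :: rat
  have den_pos: "den r > 0" for r by (simp add: den_def quotient_of_denom_pos')
  have den_int: "of_int (den r) * r \<in> \<int>" for r
  proof -
    obtain a d where q: "quotient_of r = (a, d)" by (cases "quotient_of r")
    have "d > 0" using quotient_of_denom_pos[OF q] .
    then have "of_int d * r = of_int a" using quotient_of_div[OF q] by simp
    then show ?thesis by (simp add: den_def q)
  qed
  define D where "D = (\<Prod>jk\<in>UNIV. den (B $ fst jk $ snd jk))"
  have "D > 0" unfolding D_def by (intro prod_pos) (simp add: den_pos)
  moreover have "of_int D * B$j$k \<in> \<int>" for j k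
  proof -
    have "D = den (B$j$k) * (\<Prod>jk\<in>UNIV - {(j,k)}. den (B $ fst jk $ snd jk))"
      unfolding D_def by (subst prod.remove[of UNIV "(j,k)"]) auto
    then have "of_int D * B$j$k = (of_int (den (B$j$k)) * B$j$k) * of_int (\<Prod>jk\<in>UNIV - {(j,k)}. den (B $ fst jk $ snd jk))"
      by (simp add: algebra_simps)
    then show ?thesis using Ints_mult[OF den_int[of "B$j$k"] Ints_of_int] by (simp only:)
  qed
  ultimately show ?thesis by blast
qed

theorem proposition3p1:
  fixes B :: "rat^'n^'n"
  assumes "bounded (monomial_polyhedron B)"
    and "monomial_polyhedron B \<noteq> {}"
  shows "invertible B \<and>
    (\<exists>(c :: 'n \<Rightarrow> rat) (i1 :: 'n) (i2 :: 'n).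
       (\<forall>j. c j > 0) \<and>
       (let B' = (\<chi> j. c j *s B $ (Transposition.transpose i1 i2 j)) in
          monomial_polyhedron B' = monomial_polyhedron B \<and>
          (\<forall>j k. B'$j$k \<in> \<int>) \<and>
          det B' > 0 \<and>
          invertible B' \<and>
          (\<forall>j k. matrix_inv B' $ j $ k \<ge> 0)))"
proof -
  have kB: "invertible B" "\<And>j k. matrix_inv B $ j $ k \<ge> 0" using key[OF assms] by auto
  have dB: "det B \<noteq> 0" using kB(1) invertible_det_nz by blast
  obtain D :: int where D: "D > 0" "\<And>j k. of_int D * B$j$k \<in> \<int>" using common_denom by blast
  obtain i1 i2 :: 'n where sg: "of_int (sign (Transposition.transpose i1 i2)) * det B > 0"
  proof (cases "det B > 0")
    case True
    then show ?thesis using that[of undefined undefined] by (simp add: sign_id)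
  next
    case False
    then have neg: "det B < 0" using dB by simp
    show ?thesis
    proof (cases "\<exists>a b :: 'n. a \<noteq> b")
      case True
      then obtain a b :: 'n where "a \<noteq> b" by blast
      then show ?thesis using that[of a b] neg by (simp add: sign_swap_id)
    next
      case False
      then have single: "\<And>a b :: 'n. a = b" by blast
      fix i :: 'n
      have UN: "(UNIV :: 'n set) = {i}" using single by auto
      have "det B = B$i$i" using single by (subst det_diagonal) (auto simp: UN)
      define M where "M = matrix_inv B"
      have BM: "B ** M = mat 1"
        using kB(1) unfolding M_def invertible_def matrix_inv_def by (rule someI_ex[THEN conjunct1])
      then have "(B ** M)$i$i = 1" by (simp add: mat_def)
      then have "B$i$i * M$i$i = 1" by (simp add: matrix_matrix_mult_def UN)
      moreover have "M$i$i \<ge> 0" using kB(2) M_def by simp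
      ultimately have "B$i$i > 0"
        by (metis mult_nonpos_nonneg not_le zero_less_one)
      then show ?thesis using neg \<open>det B = B$i$i\<close> by simp
    qed
  qed
  define p where "p = Transposition.transpose i1 i2"
  have p: "p permutes UNIV" unfolding p_def by (simp add: permutes_swap_id)
  define B' where "B' = (\<chi> j. (of_int D :: rat) *s B $ p j)"
  have cD: "(of_int D :: rat) > 0" using D by simp
  have U: "monomial_polyhedron B' = monomial_polyhedron B"
    unfolding B'_def by (rule polyhedron_scale_perm[OF cD p])
  have kB': "invertible B'" "\<And>j k. matrix_inv B' $ j $ k \<ge> 0" using key[of B'] U assms by auto
  have ints: "\<forall>j k. B'$j$k \<in> \<int>" unfolding B'_def using D(2) by simp
  have "det B' = (\<Prod>i\<in>(UNIV :: 'n set). (of_int D :: rat)) * det (\<chi> j. B $ p j)"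
    unfolding B'_def using det_rows_mul[of "\<lambda>_. of_int D" "\<lambda>j. B $ p j"] by simp
  also have "\<dots> = (of_int D :: rat) ^ CARD('n) * (of_int (sign p) * det B)"
    using det_permute_rows[OF p, of B] by simp
  finally have "det B' > 0" using sg cD unfolding p_def by simp
  then show ?thesis using kB(1) kB' ints U cD
    unfolding B'_def p_def Let_def
    by (intro conjI exI[of _ "\<lambda>_. of_int D"] exI[of _ i1] exI[of _ i2]) auto
qed

end
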